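(* Let $n \ge 2$ be even and $N\ge 1$ an integer. Let $\tau \in S_{N+3n-3}$ have size at most $N$. Then every permutation in $S_{N+3n-3}$ with the same cycle type as $\tau$ can be obtained from $\tau$ by successive conjugation by $n$-crossing permutations over $S_{N+3n-3}$; that is, it equals $g\tau g^{-1}$ for some $g$ that is a product of $n$-crossing permutations over $S_{N+3n-3}$.
   Context: For integers $2\le n\le m$ and $1 \le j \le m-n+1$, the $n$-crossing permutation $\pi_j\in S_m$ is $\pi_j=(j,\,j+n-1)(j+1,\,j+n-2)\cdots$, i.e. the involution sending $i \mapsto 2j+n-1-i$ for $j\le i\le j+n-1$ and fixing all other elements of $\{1,\dots,m\}$. The $n$-crossing permutations over $S_m$ are $\pi_1,\dots,\pi_{m-n+1}$. The size of a permutation is the number of points it does not fix (the number of distinct entries in its cycle notation after dropping $1$-cycles). *)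

theory Defs
  imports "HOL-Combinatorics.Permutations" "HOL-Library.Multiset"
begin

text \<open>The n-crossing permutation pi_j over S_m (m is implicit: points outside
  {j..j+n-1} are fixed). Valid crossings over S_m are those with 1 <= j <= m-n+1.\<close>
definition crossing :: "nat \<Rightarrow> nat \<Rightarrow> nat \<Rightarrow> nat" where
  "crossing n j = (\<lambda>i. if j \<le> i \<and> i \<le> j + n - 1 then 2 * j + n - 1 - i else i)"

inductive crossing_product :: "nat \<Rightarrow> nat \<Rightarrow> (nat \<Rightarrow> nat) \<Rightarrow> bool" for n m where
  cp_id: "crossing_product n m id"
| cp_step: "\<lbrakk>1 \<le> j; j + n - 1 \<le> m; crossing_product n m g\<rbrakk>
             \<Longrightarrow> crossing_product n m (crossing n j \<circ> g)"

definition perm_size :: "(nat \<Rightarrow> nat) \<Rightarrow> nat" where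
  "perm_size p = card {i. p i \<noteq> i}"

definition cycle_type :: "nat \<Rightarrow> (nat \<Rightarrow> nat) \<Rightarrow> nat multiset" where
  "cycle_type m p = image_mset card (mset_set {{(p ^^ k) x | k. True} | x. x \<in> {1..m}})"

end

theory Submission
  imports Defs "HOL-Algebra.Sym_Groups" "HOL-Combinatorics.Orbits"
begin

unbundle no m_inv_syntax

definition cyc :: "nat \<Rightarrow> nat \<Rightarrow> nat \<Rightarrow> nat \<Rightarrow> nat" where
  "cyc a b c = (\<lambda>x. if x = a then b else if x = b then c else if x = c then a else x)"

lemma cp_comp:
  assumes "crossing_product n m f" "crossing_product n m g"
  shows "crossing_product n m (f \<circ> g)"
  using assms(1)
proof (induction rule: crossing_product.induct)
  case cp_id then show ?case using assms(2) by simp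
next
  case (cp_step j f)
  have "crossing_product n m (crossing n j \<circ> (f \<circ> g))"
    by (rule crossing_product.cp_step[OF cp_step(1,2) cp_step(4)])
  then show ?case by (simp only: comp_assoc)
qed

lemma crossing_invol: "crossing n j (crossing n j i) = i"
  unfolding crossing_def by auto

lemma crossing_bij: "bij (crossing n j)"
  by (metis bij_betw_imageI crossing_invol inj_on_inverseI surj_def)

lemma crossing_inv: "inv (crossing n j) = crossing n j"
  by (metis crossing_invol inv_equality)

lemma cp_single:
  assumes "1 \<le> j" "j + n - 1 \<le> m"
  shows "crossing_product n m (crossing n j)"
  using crossing_product.cp_step[OF assms crossing_product.cp_id] by simp

lemma cp_bij: "crossing_product n m g \<Longrightarrow> bij g"
proof (induction rule: crossing_product.induct)
  case cp_id then show ?case by (rule bij_id)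
next
  case (cp_step j g) then show ?case using cp_step(4) crossing_bij[of n j] by (intro bij_betw_trans)
qed

lemma cp_inv:
  assumes "crossing_product n m g" shows "crossing_product n m (inv g)"
  using assms
proof (induction rule: crossing_product.induct)
  case cp_id then show ?case by (simp only: inv_id crossing_product.cp_id)
next
  case (cp_step j g)
  have "inv (crossing n j \<circ> g) = inv g \<circ> inv (crossing n j)"
    using o_inv_distrib[OF crossing_bij cp_bij[OF cp_step(3)]] .
  also have "\<dots> = inv g \<circ> crossing n j" by (simp add: crossing_inv)
  finally have eq: "inv (crossing n j \<circ> g) = inv g \<circ> crossing n j" .
  show ?case unfolding eq by (rule cp_comp[OF cp_step(4) cp_single[OF cp_step(1,2)]])
qed

lemma cyc_conj:
  assumes "bij g"
  shows "g \<circ> cyc a b c \<circ> inv g = cyc (g a) (g b) (g c)"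
proof
  fix x
  obtain y where y: "x = g y" using assms by (metis bij_pointE)
  have iy: "inv g x = y" using y assms by (simp add: bij_is_inj)
  have inj: "\<And>u v. g u = g v \<longleftrightarrow> u = v" using assms by (meson bij_is_inj injD)
  have ii: "\<And>u. inv g (g u) = u" using assms by (simp add: bij_is_inj)
  show "(g \<circ> cyc a b c \<circ> inv g) x = cyc (g a) (g b) (g c) x"
    by (simp add: iy y cyc_def inj ii)
qed

lemma cyc_cp_conj:
  assumes "crossing_product n m (cyc a b c)" "crossing_product n m g"
  shows "crossing_product n m (cyc (g a) (g b) (g c))"
  using cyc_conj[OF cp_bij[OF assms(2)], of a b c] cp_comp[OF cp_comp[OF assms(2) assms(1)] cp_inv[OF assms(2)]]
  by simp

lemma cyc_rot: "a \<noteq> b \<Longrightarrow> b \<noteq> c \<Longrightarrow> a \<noteq> c \<Longrightarrow> cyc a b c = cyc b c a"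
  by (auto simp: cyc_def fun_eq_iff)

lemma cyc_inv: assumes "a \<noteq> b" "b \<noteq> c" "a \<noteq> c" shows "inv (cyc a b c) = cyc c b a"
  by (rule inv_equality) (use assms in \<open>auto simp: cyc_def\<close>)

lemma cyc_cp_inv:
  assumes "crossing_product n m (cyc a b c)" "a \<noteq> b" "b \<noteq> c" "a \<noteq> c"
  shows "crossing_product n m (cyc c b a)"
  using cp_inv[OF assms(1)] cyc_inv[OF assms(2-4)] by simp

lemma cj_eq: "crossing n j \<circ> crossing n (j+1) \<circ> crossing n (j+2) \<circ> crossing n (j+1)
   = cyc j (j+n-1) (j+n+1)" if "n \<ge> 2"
  using that unfolding fun_eq_iff crossing_def cyc_def by (auto split: if_splits)

lemma cyc_app1[simp]: "cyc a b c a = b" by (simp add: cyc_def)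
lemma cyc_app2: "a \<noteq> b \<Longrightarrow> cyc a b c b = c" by (simp add: cyc_def)
lemma cyc_app3: "a \<noteq> c \<Longrightarrow> b \<noteq> c \<Longrightarrow> cyc a b c c = a" by (simp add: cyc_def)
lemma cyc_app4: "x \<noteq> a \<Longrightarrow> x \<noteq> b \<Longrightarrow> x \<noteq> c \<Longrightarrow> cyc a b c x = x" by (simp add: cyc_def)

lemma cyc_sym:
  assumes "crossing_product n m (cyc a b c)" "a \<noteq> b" "b \<noteq> c" "a \<noteq> c"
  shows "crossing_product n m (cyc b c a)" "crossing_product n m (cyc c a b)"
    "crossing_product n m (cyc c b a)" "crossing_product n m (cyc b a c)"
    "crossing_product n m (cyc a c b)"
proof -
  show 1: "crossing_product n m (cyc b c a)" using assms cyc_rot[of a b c] by simp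
  show 2: "crossing_product n m (cyc c a b)" using 1 assms cyc_rot[of b c a] by simp
  show 3: "crossing_product n m (cyc c b a)" using cyc_cp_inv[OF assms] .
  show 4: "crossing_product n m (cyc b a c)" using 3 assms cyc_rot[of c b a] by simp
  show "crossing_product n m (cyc a c b)" using 4 assms cyc_rot[of b a c] by simp
qed

lemma cj_cp:
  assumes "n \<ge> 2" "1 \<le> j" "j + n + 1 \<le> m"
  shows "crossing_product n m (cyc j (j+n-1) (j+n+1))"
proof -
  have "crossing_product n m (crossing n j \<circ> crossing n (j+1) \<circ> crossing n (j+2) \<circ> crossing n (j+1))"
    using assms by (intro cp_comp cp_single) auto
  then show ?thesis using cj_eq[OF assms(1), of j] by simp
qed

lemma f3_cp:
  assumes "n \<ge> 2" "1 \<le> b" "b + 4 \<le> m" "2 * n \<le> m"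
  shows "crossing_product n m (cyc b (b+2) (b+4))"
proof (cases "b + n + 2 \<le> m")
  case True
  define g where "g = crossing n (b+3) \<circ> crossing n (b+1)"
  have g: "crossing_product n m g" unfolding g_def using assms True by (intro cp_comp cp_single) auto
  have "g b = b" "g (b+n-1) = b+2" "g (b+n+1) = b+4" using assms
    by (auto simp: g_def crossing_def)
  then show ?thesis using cyc_cp_conj[OF cj_cp[OF assms(1,2)] g] True by simp
next
  case False
  define j where "j = b + 3 - n"
  have j: "1 \<le> j" "j + n - 1 = b + 2" "j + n + 1 = b + 4" using False assms by (auto simp: j_def)
  have c: "crossing_product n m (cyc j (b+2) (b+4))" using cj_cp[OF assms(1) j(1), of m] j assms by (simp add: add.commute)
  define g where "g = crossing n (b+2-n)"
  have gc: "crossing_product n m g" unfolding g_def using assms False by (intro cp_single) auto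
  have "g j = b" "g (b+2) = b+2" "g (b+4) = b+4" using assms False
    by (auto simp: g_def crossing_def j_def)
  then show ?thesis using cyc_cp_conj[OF c gc] by simp
qed

definition full :: "nat \<Rightarrow> nat \<Rightarrow> nat set \<Rightarrow> bool" where
  "full n m Y \<longleftrightarrow> (\<forall>a\<in>Y. \<forall>b\<in>Y. \<forall>c\<in>Y. a \<noteq> b \<longrightarrow> b \<noteq> c \<longrightarrow> a \<noteq> c \<longrightarrow> crossing_product n m (cyc a b c))"

lemma avail:
  assumes "finite Y" "5 \<le> card Y"
  shows "\<exists>v\<in>Y. v \<noteq> p \<and> v \<noteq> q \<and> v \<noteq> r \<and> v \<noteq> s"
proof (rule ccontr)
  assume "\<not> ?thesis"
  then have "Y \<subseteq> {p,q,r,s}" by auto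
  then have "card Y \<le> card {p,q,r,s}" by (intro card_mono) auto
  also have "\<dots> \<le> 4" by (simp add: card_insert_if)
  finally show False using assms by simp
qed

lemma ext_full:
  assumes F: "full n m Y" and fin: "finite Y" and c5: "5 \<le> card Y"
    and ab: "a \<in> Y" "b \<in> Y" "a \<noteq> b" and z: "z \<notin> Y"
    and P: "crossing_product n m (cyc a b z)"
  shows "full n m (insert z Y)"
proof -
  have key: "crossing_product n m (cyc x y z)" if xy: "x \<in> Y" "y \<in> Y" "x \<noteq> y" for x y
  proof -
    obtain w where w: "w \<in> Y" "w \<noteq> a" "w \<noteq> b" "w \<noteq> x" "w \<noteq> y" using avail[OF fin c5] by blast
    have s1: "crossing_product n m (cyc a w z)"
    proof -
      obtain v where v: "v \<in> Y" "v \<noteq> a" "v \<noteq> b" "v \<noteq> w" using avail[OF fin c5] by blast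
      have g: "crossing_product n m (cyc b w v)" using F v w ab unfolding full_def by auto
      have "cyc b w v a = a" "cyc b w v b = w" "cyc b w v z = z"
        using v w ab z by (auto simp: cyc_app4 cyc_app2) (metis cyc_app4)
      then show ?thesis using cyc_cp_conj[OF P g] by simp
    qed
    have s2: "crossing_product n m (cyc x w z)"
    proof (cases "a = x")
      case True then show ?thesis using s1 by simp
    next
      case False
      obtain v where v: "v \<in> Y" "v \<noteq> a" "v \<noteq> x" "v \<noteq> w" using avail[OF fin c5] by blast
      have g: "crossing_product n m (cyc a x v)" using F v w ab xy False unfolding full_def by auto
      have "cyc a x v a = x" "cyc a x v w = w" "cyc a x v z = z"
        using v w ab z xy False by (auto intro: cyc_app4)
      then show ?thesis using cyc_cp_conj[OF s1 g] by simp
    qed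
    obtain v where v: "v \<in> Y" "v \<noteq> w" "v \<noteq> y" "v \<noteq> x" using avail[OF fin c5] by blast
    have g: "crossing_product n m (cyc w y v)" using F v w xy unfolding full_def by auto
    have "cyc w y v x = x" "cyc w y v w = y" "cyc w y v z = z"
      using v w xy z by (auto intro: cyc_app4)
    then show ?thesis using cyc_cp_conj[OF s2 g] by simp
  qed
  show ?thesis unfolding full_def
  proof (intro ballI impI)
    fix a' b' c' assume in3: "a' \<in> insert z Y" "b' \<in> insert z Y" "c' \<in> insert z Y"
      and d: "a' \<noteq> b'" "b' \<noteq> c'" "a' \<noteq> c'"
    show "crossing_product n m (cyc a' b' c')"
    proof (cases "a' = z")
      case True
      then have "b' \<in> Y" "c' \<in> Y" using in3 d by auto
      from cyc_sym(2)[OF key[OF this d(2)]] show ?thesis using True d by auto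
    next
      case na: False
      show ?thesis
      proof (cases "b' = z")
        case True
        then have "a' \<in> Y" "c' \<in> Y" using in3 d na by auto
        from cyc_sym(1)[OF key[OF this(2,1) d(3)[symmetric]]] show ?thesis using True d by auto
      next
        case nb: False
        show ?thesis
        proof (cases "c' = z")
          case True
          then have "a' \<in> Y" "b' \<in> Y" using in3 d na by auto
          from key[OF this d(1)] show ?thesis using True by simp
        next
          case False
          then show ?thesis using F in3 d na nb unfolding full_def by auto
        qed
      qed
    qed
  qed
qed

lemma base5:
  assumes d: "distinct [p1,p2,p3,p4,p5]"
    and A: "crossing_product n m (cyc p1 p2 p3)"
    and B: "crossing_product n m (cyc p2 p3 p4)"
    and C: "crossing_product n m (cyc p3 p4 p5)"
  shows "full n m {p1,p2,p3,p4,p5}"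
proof -
  note ev = cyc_app2 cyc_app3 cyc_app4
  have dd: "p1 \<noteq> p2" "p1 \<noteq> p3" "p1 \<noteq> p4" "p1 \<noteq> p5" "p2 \<noteq> p3" "p2 \<noteq> p4" "p2 \<noteq> p5"
    "p3 \<noteq> p4" "p3 \<noteq> p5" "p4 \<noteq> p5" using d by auto
  have Bi: "crossing_product n m (cyc p4 p3 p2)" using cyc_sym(3)[OF B] d by auto
  have Ci: "crossing_product n m (cyc p5 p4 p3)" using cyc_sym(3)[OF C] d by auto
  have C2: "crossing_product n m (cyc p4 p5 p3)" using cyc_sym(1)[OF C] d by auto
  have X134: "crossing_product n m (cyc p1 p3 p4)" using cyc_cp_conj[OF A B] by (simp add: ev dd dd[symmetric])
  have X142: "crossing_product n m (cyc p1 p4 p2)" using cyc_cp_conj[OF A Bi] by (simp add: ev dd dd[symmetric])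
  have X245: "crossing_product n m (cyc p2 p4 p5)" using cyc_cp_conj[OF B C] by (simp add: ev dd dd[symmetric])
  have X253: "crossing_product n m (cyc p2 p5 p3)" using cyc_cp_conj[OF B Ci] by (simp add: ev dd dd[symmetric])
  have X145: "crossing_product n m (cyc p1 p4 p5)" using cyc_cp_conj[OF X134 C] by (simp add: ev dd dd[symmetric])
  have X153: "crossing_product n m (cyc p1 p5 p3)" using cyc_cp_conj[OF X134 Ci] by (simp add: ev dd dd[symmetric])
  have X124: "crossing_product n m (cyc p1 p2 p4)" using cyc_sym(5)[OF X142] d by auto
  have X125: "crossing_product n m (cyc p1 p2 p5)" using cyc_cp_conj[OF X124 C2] by (simp add: ev dd dd[symmetric])
  note all = A B C X134 X142 X245 X253 X145 X153 X125
  note S = all all[THEN cyc_sym(1)] all[THEN cyc_sym(2)] all[THEN cyc_sym(3)]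
     all[THEN cyc_sym(4)] all[THEN cyc_sym(5)]
  show ?thesis unfolding full_def
    using S dd by (simp add: dd dd[symmetric]) 
qed

lemma odd_full:
  assumes n: "n \<ge> 2" and m: "2 * n \<le> m" "10 \<le> m"
  shows "9 \<le> k \<Longrightarrow> k \<le> m \<Longrightarrow> full n m {i. 1 \<le> i \<and> i \<le> k \<and> odd i}"
proof (induction k)
  case 0 then show ?case by simp
next
  case (Suc k)
  show ?case
  proof (cases "Suc k = 9")
    case True
    have e: "{i. 1 \<le> i \<and> i \<le> Suc k \<and> odd i} = {1,3,5,7,9::nat}"
      unfolding True by (rule Set.set_eqI, simp, presburger)
    have h1: "crossing_product n m (cyc 1 3 5)"
      proof -
      have e1: "(1::nat) + 2 = 3" "(1::nat) + 4 = 5" by simp_all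
      have "1 + 4 \<le> m" using m by simp
      from f3_cp[OF n order.refl this m(1)] show ?thesis unfolding e1 .
    qed
    have h3: "crossing_product n m (cyc 3 5 7)"
      using f3_cp[OF n, of 3 m] m by simp
    have h5: "crossing_product n m (cyc 5 7 9)"
      using f3_cp[OF n, of 5 m] m by simp
    have "full n m {1,3,5,7,9::nat}"
      by (rule base5[OF _ h1 h3 h5]) simp
    then show ?thesis using e by simp
  next
    case False
    then have k9: "9 \<le> k" "k \<le> m" using Suc.prems by auto
    have IH: "full n m {i. 1 \<le> i \<and> i \<le> k \<and> odd i}" using Suc.IH k9 by simp
    show ?thesis
    proof (cases "odd (Suc k)")
      case False
      then have "{i. 1 \<le> i \<and> i \<le> Suc k \<and> odd i} = {i. 1 \<le> i \<and> i \<le> k \<and> odd i}"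
        by (auto simp: le_Suc_eq)
      then show ?thesis using IH by simp
    next
      case True
      define Y where "Y = {i. 1 \<le> i \<and> i \<le> k \<and> odd i}"
      have e: "{i. 1 \<le> i \<and> i \<le> Suc k \<and> odd i} = insert (Suc k) Y"
        using True by (auto simp: Y_def le_Suc_eq)
      have fin: "finite Y" unfolding Y_def by (rule finite_subset[of _ "{..k}"]) auto
      have sub: "{1,3,5,7,9} \<subseteq> Y" using k9 by (auto simp: Y_def)
      have c5: "5 \<le> card Y" using card_mono[OF fin sub] by simp
      have P: "crossing_product n m (cyc (k-3) (k-3+2) (k-3+4))"
        using f3_cp[OF n, of "k-3" m] k9 Suc.prems m by simp
      have eqs: "k-3+2 = k-1" "k-3+4 = Suc k" using k9 by auto
      show ?thesis unfolding e
      proof (rule ext_full[OF IH[folded Y_def] fin c5, of "k-3" "k-1"])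
        have "odd (k-3)" "odd (k-1)" using True k9 by presburger+
        then show "k - 3 \<in> Y" "k - 1 \<in> Y" using k9 unfolding Y_def by auto
        show "k - 3 \<noteq> k - 1" using k9 by simp
        show "Suc k \<notin> Y" unfolding Y_def by simp
        show "crossing_product n m (cyc (k - 3) (k - 1) (Suc k))" using P eqs by simp
      qed
    qed
  qed
qed

lemma even_full:
  assumes n: "n \<ge> 2" "even n" and m: "2 * n + 2 \<le> m" "10 \<le> m"
  shows "k \<le> m \<Longrightarrow> full n m ({i. 1 \<le> i \<and> i \<le> m \<and> odd i} \<union> {i. 1 \<le> i \<and> i \<le> k \<and> even i})"
proof (induction k)
  case 0
  have e: "{i. 1 \<le> i \<and> i \<le> (0::nat) \<and> even i} = {}" by auto
  show ?case unfolding e using odd_full[OF n(1), of m m] m by simp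
next
  case (Suc k)
  define Y where "Y = {i. 1 \<le> i \<and> i \<le> m \<and> odd i} \<union> {i. 1 \<le> i \<and> i \<le> k \<and> even i}"
  have IH: "full n m Y" using Suc Y_def by simp
  show ?case
  proof (cases "even (Suc k)")
    case False
    then have "{i. 1 \<le> i \<and> i \<le> m \<and> odd i} \<union> {i. 1 \<le> i \<and> i \<le> Suc k \<and> even i} = Y"
      by (auto simp: le_Suc_eq Y_def)
    then show ?thesis using IH by simp
  next
    case True
    have e: "{i. 1 \<le> i \<and> i \<le> m \<and> odd i} \<union> {i. 1 \<le> i \<and> i \<le> Suc k \<and> even i} = insert (Suc k) Y"
      using True Suc.prems by (auto simp: Y_def le_Suc_eq)
    have "Y \<subseteq> {..m}" using Suc.prems by (auto simp: Y_def)
    then have fin: "finite Y" using finite_subset by blast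
    have sub: "{1,3,5,7,9} \<subseteq> Y" using m by (auto simp: Y_def)
    have c5: "5 \<le> card Y" using card_mono[OF fin sub] by simp
    have z: "Suc k \<notin> Y" using True by (auto simp: Y_def)
    show ?thesis
    proof (cases "Suc k \<le> n")
      case le: True
      have P0: "crossing_product n m (cyc (Suc k) (Suc k + n - 1) (Suc k + n + 1))"
        using cj_cp[OF n(1), of "Suc k" m] le m by simp
      have P: "crossing_product n m (cyc (Suc k + n - 1) (Suc k + n + 1) (Suc k))"
        using cyc_sym(1)[OF P0] n by auto
      show ?thesis unfolding e
      proof (rule ext_full[OF IH fin c5 _ _ _ z P])
        have "odd (Suc k + n - 1)" "odd (Suc k + n + 1)" using True n by presburger+
        moreover have "Suc k + n + 1 \<le> m" using le m by simp
        moreover have "1 \<le> Suc k + n - 1" using n by simp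
        ultimately show "Suc k + n - 1 \<in> Y" "Suc k + n + 1 \<in> Y" unfolding Y_def by auto
        show "Suc k + n - 1 \<noteq> Suc k + n + 1" using n by simp
      qed
    next
      case gt: False
      then have ge: "n + 2 \<le> Suc k" using True n by presburger
      define j where "j = Suc k - n - 1"
      have j: "1 \<le> j" "j + n - 1 = k - 1" "j + n + 1 = Suc k" using ge n by (auto simp: j_def)
      have P: "crossing_product n m (cyc j (k - 1) (Suc k))"
        using cj_cp[OF n(1) j(1), of m] j Suc.prems by simp
      show ?thesis unfolding e
      proof (rule ext_full[OF IH fin c5 _ _ _ z P])
        have "odd j" "even (k - 1)" using True n ge unfolding j_def by presburger+
        moreover have "j \<le> m" "k - 1 \<le> k" "1 \<le> k - 1" using Suc.prems ge n j by auto
        ultimately show "j \<in> Y" "k - 1 \<in> Y" unfolding Y_def using j(1) by auto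
        show "j \<noteq> k - 1" using \<open>odd j\<close> \<open>even (k - 1)\<close> by auto
      qed
    qed
  qed
qed

lemma all_full:
  assumes n: "n \<ge> 2" "even n" and m: "2 * n + 2 \<le> m" "10 \<le> m"
  shows "full n m {1..m}"
proof -
  have "{i. 1 \<le> i \<and> i \<le> m \<and> odd i} \<union> {i. 1 \<le> i \<and> i \<le> m \<and> even i} = {1..m}" by auto
  then show ?thesis using even_full[OF n m, of m] by simp
qed

definition orbs :: "('a \<Rightarrow> 'a) \<Rightarrow> 'a set \<Rightarrow> 'a set set" where
  "orbs p A = {orbit p x | x. x \<in> A}"

lemma orb_basic:
  fixes x :: 'a
  assumes "p permutes A" "finite A"
  defines "k \<equiv> funpow_dist1 p x x"
  shows "card (orbit p x) = k" "(p ^^ k) x = x" "orbit p x = (\<lambda>i. (p ^^ i) x) ` {0..<k}"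
    "inj_on (\<lambda>i. (p ^^ i) x) {0..<k}" "0 < k"
proof -
  have perm: "permutation p" using assms by (auto simp: permutation_permutes)
  have self: "x \<in> orbit p x" by (rule permutation_self_in_orbit[OF perm])
  show o: "orbit p x = (\<lambda>i. (p ^^ i) x) ` {0..<k}" unfolding k_def by (rule orbit_conv_funpow_dist1[OF self])
  show i: "inj_on (\<lambda>i. (p ^^ i) x) {0..<k}" unfolding k_def by (rule inj_on_funpow_dist1[OF self])
  show "card (orbit p x) = k" using card_image[OF i] o by simp
  show "(p ^^ k) x = x" unfolding k_def by (rule funpow_dist1_prop[OF self])
  show "0 < k" unfolding k_def by simp
qed

lemma orb_mod:
  assumes "p permutes A" "finite A"
  shows "(p ^^ i) x = (p ^^ j) x \<longleftrightarrow> i mod card (orbit p x) = j mod card (orbit p x)"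
proof -
  note b = orb_basic[OF assms, of x]
  define k where "k = card (orbit p x)"
  have k: "(p ^^ k) x = x" "0 < k" "inj_on (\<lambda>i. (p ^^ i) x) {0..<k}" using b by (simp_all add: k_def)
  have "(p ^^ i) x = (p ^^ j) x \<longleftrightarrow> (p ^^ (i mod k)) x = (p ^^ (j mod k)) x"
    using funpow_mod_eq[OF k(1)] by simp
  also have "\<dots> \<longleftrightarrow> i mod k = j mod k"
    using inj_onD[OF k(3)] k(2) by auto
  finally show ?thesis by (simp add: k_def)
qed

lemma orbs_remove:
  assumes "p permutes A" "finite A" "x \<in> A"
  defines "Q \<equiv> orbit p x"
  shows "perm_restrict p (A - Q) permutes (A - Q)"
    "orbs (perm_restrict p (A - Q)) (A - Q) = orbs p A - {Q}"
proof -
  have cyc: "cyclic_on p Q" unfolding Q_def by (rule cyclic_on_orbit[OF assms(1,2)])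
  show pr: "perm_restrict p (A - Q) permutes (A - Q)" by (rule perm_restrict_diff_cyclic[OF assms(1) cyc])
  have perm: "permutation p" using assms by (auto simp: permutation_permutes)
  have self: "\<And>y. y \<in> orbit p y" by (rule permutation_self_in_orbit[OF perm])
  have stay: "p y \<in> A - Q" if "y \<in> A - Q" for y
    using that cyclic_on_f_in[OF assms(1) cyc, of y] permutes_in_image[OF assms(1)] by auto
  have oeq: "orbit (perm_restrict p (A - Q)) y = orbit p y" if "y \<in> A - Q" for y
  proof -
    have "orbit p y = orbit (perm_restrict p (A - Q)) y"
      by (rule orbit_cong0[OF that]) (use stay in \<open>auto simp: perm_restrict_simps\<close>)
    then show ?thesis by simp
  qed
  have neq: "orbit p y \<noteq> Q \<longleftrightarrow> y \<notin> Q" if "y \<in> A" for y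
    using self[of y] orbit_cyclic_eq3[OF cyc] by auto
  show "orbs (perm_restrict p (A - Q)) (A - Q) = orbs p A - {Q}"
  proof (rule Set.set_eqI)
    fix X
    show "X \<in> orbs (perm_restrict p (A - Q)) (A - Q) \<longleftrightarrow> X \<in> orbs p A - {Q}"
    proof
      assume "X \<in> orbs (perm_restrict p (A - Q)) (A - Q)"
      then obtain y where "y \<in> A - Q" "X = orbit (perm_restrict p (A - Q)) y" unfolding orbs_def by blast
      then show "X \<in> orbs p A - {Q}" using oeq neq unfolding orbs_def by blast
    next
      assume "X \<in> orbs p A - {Q}"
      then obtain y where "y \<in> A" "X = orbit p y" "X \<noteq> Q" unfolding orbs_def by blast
      then show "X \<in> orbs (perm_restrict p (A - Q)) (A - Q)" using oeq neq unfolding orbs_def by blast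
    qed
  qed
qed

lemma conj_ex:
  assumes "finite A" "\<sigma> permutes A" "\<tau> permutes B" "finite B"
    "image_mset card (mset_set (orbs \<sigma> A)) = image_mset card (mset_set (orbs \<tau> B))"
  shows "\<exists>h. bij_betw h B A \<and> (\<forall>z\<in>B. h (\<tau> z) = \<sigma> (h z))"
  using assms
proof (induction "card A" arbitrary: A B \<sigma> \<tau> rule: less_induct)
  case less
  show ?case
  proof (cases "A = {}")
    case True
    then have "orbs \<sigma> A = {}" by (simp add: orbs_def)
    then have "mset_set (orbs \<tau> B) = {#}" using less.prems(5) by simp
    moreover have "finite (orbs \<tau> B)" using less.prems(4) by (simp add: orbs_def)
    ultimately have "orbs \<tau> B = {}" by (simp add: mset_set_empty_iff)
    then have "B = {}" by (auto simp: orbs_def)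
    then show ?thesis using True by (auto simp: bij_betw_def)
  next
    case False
    then obtain x where x: "x \<in> A" by blast
    define Q where "Q = orbit \<sigma> x"
    define k where "k = card Q"
    have finoA: "finite (orbs \<sigma> A)" using less.prems(1) by (simp add: orbs_def)
    have finoB: "finite (orbs \<tau> B)" using less.prems(4) by (simp add: orbs_def)
    have OinA: "Q \<in> orbs \<sigma> A" using x by (auto simp: orbs_def Q_def)
    have mA: "mset_set (orbs \<sigma> A) = add_mset Q (mset_set (orbs \<sigma> A - {Q}))"
      using mset_set.insert_remove[OF finoA, of Q] insert_absorb[OF OinA] by simp
    have "k \<in># image_mset card (mset_set (orbs \<sigma> A))" using mA k_def by simp
    then have "k \<in># image_mset card (mset_set (orbs \<tau> B))" using less.prems(5) by simp
    then have "k \<in> card ` orbs \<tau> B" using finoB by (simp only: in_image_mset finite_set_mset_mset_set)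
    then obtain Q' where Q': "Q' \<in> orbs \<tau> B" "card Q' = k" by (metis imageE)
    then obtain y where y: "y \<in> B" "Q' = orbit \<tau> y" by (auto simp: orbs_def)
    have mB: "mset_set (orbs \<tau> B) = add_mset Q' (mset_set (orbs \<tau> B - {Q'}))"
      using mset_set.insert_remove[OF finoB, of Q'] insert_absorb[OF Q'(1)] by simp
    define \<sigma>' where "\<sigma>' = perm_restrict \<sigma> (A - Q)"
    define \<tau>' where "\<tau>' = perm_restrict \<tau> (B - Q')"
    note rA = orbs_remove[OF less.prems(2,1) x, folded Q_def \<sigma>'_def]
    note rB = orbs_remove[OF less.prems(3,4) y(1), folded y(2) \<tau>'_def]
    have "add_mset (card Q) (image_mset card (mset_set (orbs \<sigma> A - {Q}))) = add_mset (card Q') (image_mset card (mset_set (orbs \<tau> B - {Q'})))"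
      using less.prems(5) unfolding mA mB by (simp only: image_mset_add_mset)
    then have eq0: "image_mset card (mset_set (orbs \<sigma> A - {Q})) = image_mset card (mset_set (orbs \<tau> B - {Q'}))"
      using Q'(2) k_def by simp
    have eqr: "image_mset card (mset_set (orbs \<sigma>' (A - Q))) = image_mset card (mset_set (orbs \<tau>' (B - Q')))"
      using eq0 rA(2) rB(2) unfolding \<sigma>'_def \<tau>'_def by (simp only:)
    have pA: "\<sigma>' permutes (A - Q)" unfolding \<sigma>'_def by (rule rA(1))
    have pB: "\<tau>' permutes (B - Q')" unfolding \<tau>'_def by (rule rB(1))
    have lt: "card (A - Q) < card A"
    proof -
      have "x \<in> Q" unfolding Q_def
        using less.prems(1,2) by (intro permutation_self_in_orbit) (auto simp: permutation_permutes)
      then have "A - Q \<subset> A" using x by blast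
      then show ?thesis using less.prems(1) by (rule psubset_card_mono[rotated])
    qed
    obtain h' where h': "bij_betw h' (B - Q') (A - Q)" "\<forall>z\<in>B - Q'. h' (\<tau>' z) = \<sigma>' (h' z)"
      using less.hyps[OF lt _ pA pB _ eqr] less.prems(1,4) by auto
    define h where "h z = (if z \<in> Q' then (\<sigma> ^^ funpow_dist \<tau> y z) x else h' z)" for z
    note bx = orb_basic[OF less.prems(2,1), of x, folded Q_def]
    note by' = orb_basic[OF less.prems(3,4), of y, folded y(2)]
    have kk: "funpow_dist1 \<sigma> x x = k" "funpow_dist1 \<tau> y y = k" using bx by' Q'(2) k_def by simp_all
    have hpow: "h ((\<tau> ^^ i) y) = (\<sigma> ^^ i) x" for i
    proof -
      have inO: "(\<tau> ^^ i) y \<in> Q'" unfolding y(2)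
        using less.prems(3,4) by (intro funpow_in_orbit permutation_self_in_orbit) (auto simp: permutation_permutes)
      define d where "d = funpow_dist \<tau> y ((\<tau> ^^ i) y)"
      have "(\<tau> ^^ d) y = (\<tau> ^^ i) y" unfolding d_def using inO y(2) by (simp add: funpow_dist_prop)
      then have "d mod k = i mod k" using orb_mod[OF less.prems(3,4), of d y i] y(2) Q'(2) by simp
      then have "(\<sigma> ^^ d) x = (\<sigma> ^^ i) x" using orb_mod[OF less.prems(2,1), of d x i] Q_def k_def by simp
      then show ?thesis using inO by (simp add: h_def d_def)
    qed
    have hO: "bij_betw h Q' Q"
    proof -
      have img: "h ` Q' = Q"
      proof -
        have "h ` Q' = (\<lambda>i. h ((\<tau> ^^ i) y)) ` {0..<k}" using by'(3) kk by (simp add: image_image)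
        also have "\<dots> = Q" using hpow bx(3) kk by simp
        finally show ?thesis .
      qed
      have "finite Q'" using by'(3) by simp
      moreover have "card (h ` Q') = card Q'" using img Q'(2) k_def by simp
      ultimately have "inj_on h Q'" by (rule eq_card_imp_inj_on)
      then show ?thesis using img by (simp add: bij_betw_def)
    qed
    have hR: "bij_betw h (B - Q') (A - Q)"
      using h'(1) by (rule bij_betw_cong[THEN iffD1, rotated]) (auto simp: h_def)
    have OA: "Q \<subseteq> A" unfolding Q_def by (rule permutes_orbit_subset[OF less.prems(2) x])
    have OB: "Q' \<subseteq> B" unfolding y(2) by (rule permutes_orbit_subset[OF less.prems(3) y(1)])
    have bij: "bij_betw h B A"
    proof -
      have "bij_betw h (Q' \<union> (B - Q')) (Q \<union> (A - Q))"
        by (rule bij_betw_combine[OF hO hR]) auto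
      moreover have "Q' \<union> (B - Q') = B" "Q \<union> (A - Q) = A" using OA OB by auto
      ultimately show ?thesis by simp
    qed
    have comm: "h (\<tau> z) = \<sigma> (h z)" if z: "z \<in> B" for z
    proof (cases "z \<in> Q'")
      case True
      then obtain i where i: "z = (\<tau> ^^ i) y" using by'(3) by auto
      have "h (\<tau> z) = h ((\<tau> ^^ Suc i) y)" using i by simp
      also have "\<dots> = (\<sigma> ^^ Suc i) x" by (rule hpow)
      also have "\<dots> = \<sigma> (h z)" using hpow i by simp
      finally show ?thesis .
    next
      case False
      have cyc: "cyclic_on \<tau> Q'" unfolding y(2) by (rule cyclic_on_orbit[OF less.prems(3,4)])
      have tz: "\<tau> z \<notin> Q'" using cyclic_on_f_in[OF less.prems(3) cyc, of z] False by auto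
      have hz: "h' z \<in> A - Q" using h'(1) z False by (auto simp: bij_betw_def)
      have "h (\<tau> z) = h' (\<tau> z)" using tz by (simp add: h_def)
      also have "\<dots> = h' (\<tau>' z)" using z False by (simp add: \<tau>'_def perm_restrict_simps)
      also have "\<dots> = \<sigma>' (h' z)" using h'(2) z False by auto
      also have "\<dots> = \<sigma> (h' z)" using hz by (simp add: \<sigma>'_def perm_restrict_simps)
      also have "\<dots> = \<sigma> (h z)" using False by (simp add: h_def)
      finally show ?thesis .
    qed
    show ?thesis using bij comm by blast
  qed
qed

lemma cyc_list: "distinct [a,b,c] \<Longrightarrow> cycle_of_list [a,b,c] = cyc a b c"
  by (auto simp: fun_eq_iff cyc_def transpose_def)

lemma alt_cp:
  assumes F: "full n m {1..m}" and p: "p \<in> carrier (alt_group m)"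
  shows "crossing_product n m p"
proof -
  have three: "crossing_product n m h" if "h \<in> three_cycles m" for h
  proof -
    from that obtain cs where cs: "h = cycle_of_list cs" "distinct cs" "length cs = 3" "set cs \<subseteq> {1..m}"
      by auto
    obtain a b c where "cs = [a,b,c]" using stupid_lemma[OF cs(3)] by metis
    then show ?thesis using F cs cyc_list[of a b c] unfolding full_def by auto
  qed
  have "p \<in> generate (alt_group m) (three_cycles m)"
    using p alt_group_carrier_as_three_cycles[of m] by simp
  then show ?thesis
  proof (induction rule: generate.induct)
    case one
    show ?case unfolding alt_group_one by (rule crossing_product.cp_id)
  next
    case (incl h)
    show ?case by (rule three[OF incl])
  next
    case (inv h)
    have "m_inv (alt_group m) h = inv h"
      using alt_group_inv_equality three_cycles_incl inv by blast
    then show ?case using cp_inv[OF three[OF inv]] by simp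
  next
    case (eng h1 h2)
    then show ?case unfolding alt_group_mult using cp_comp by blast
  qed
qed

lemma conj_perm:
  assumes s: "\<sigma> permutes {1..m}" and t: "\<tau> permutes {1..m}"
    and ct: "cycle_type m \<sigma> = cycle_type m \<tau>"
  shows "\<exists>h. h permutes {1..m} \<and> \<sigma> = h \<circ> \<tau> \<circ> inv h"
proof -
  define S where "S = {1..(m::nat)}"
  have ctd: "cycle_type m p = image_mset card (mset_set (orbs p S))" if "p permutes S" for p
  proof -
    have perm: "permutation p" using that by (auto simp: permutation_permutes S_def)
    have "{{(p ^^ k) x | k. True} | x. x \<in> {1..m}} = orbs p S"
      unfolding orbs_def S_def orbit_altdef_permutation[OF perm] ..
    then show ?thesis unfolding cycle_type_def by simp
  qed
  have eq: "image_mset card (mset_set (orbs \<sigma> S)) = image_mset card (mset_set (orbs \<tau> S))"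
    using ct ctd s t unfolding S_def by simp
  obtain h0 where h0: "bij_betw h0 S S" "\<forall>z\<in>S. h0 (\<tau> z) = \<sigma> (h0 z)"
    using conj_ex[of S \<sigma> \<tau> S] eq s t unfolding S_def by auto
  define h where "h x = (if x \<in> S then h0 x else x)" for x
  have hb: "bij_betw h S S" using h0(1) by (rule bij_betw_cong[THEN iffD1, rotated]) (simp add: h_def)
  have hp: "h permutes S" by (rule bij_imp_permutes[OF hb]) (simp add: h_def)
  have comm: "\<sigma> \<circ> h = h \<circ> \<tau>"
  proof
    fix x
    show "(\<sigma> \<circ> h) x = (h \<circ> \<tau>) x"
    proof (cases "x \<in> S")
      case True
      have "\<tau> x \<in> S" using t True unfolding S_def by (metis permutes_in_image)
      moreover have "h0 x \<in> S" using h0(1) True by (auto simp: bij_betw_def)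
      ultimately show ?thesis using True h0(2) by (simp add: h_def)
    next
      case False
      have "\<tau> x = x" "\<sigma> x = x" using False s t unfolding S_def by (simp_all add: permutes_not_in)
      then show ?thesis using False by (simp add: h_def)
    qed
  qed
  have "\<sigma> = \<sigma> \<circ> (h \<circ> inv h)" using permutes_inv_o(1)[OF hp] by simp
  also have "\<dots> = (\<sigma> \<circ> h) \<circ> inv h" by (simp only: comp_assoc)
  also have "\<dots> = h \<circ> \<tau> \<circ> inv h" by (simp only: comm)
  finally show ?thesis using hp unfolding S_def by blast
qed

lemma cross2: "crossing 2 j = transpose j (j+1)"
  by (auto simp: fun_eq_iff crossing_def transpose_def)

lemma trans_cp2: "1 \<le> a \<Longrightarrow> a < b \<Longrightarrow> b \<le> m \<Longrightarrow> crossing_product 2 m (transpose a b)"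
proof (induction b)
  case 0 then show ?case by simp
next
  case (Suc b)
  show ?case
  proof (cases "a = b")
    case True
    then show ?thesis using cp_single[of a 2 m] Suc.prems cross2[of a] by simp
  next
    case False
    then have ab: "a < b" using Suc.prems by simp
    have e: "transpose a (Suc b) = transpose b (Suc b) \<circ> transpose a b \<circ> transpose b (Suc b)"
      using ab by (auto simp: fun_eq_iff transpose_def)
    have t1: "crossing_product 2 m (transpose b (Suc b))"
      using cp_single[of b 2 m] Suc.prems ab cross2[of b] by simp
    have t2: "crossing_product 2 m (transpose a b)" using Suc ab by simp
    show ?thesis unfolding e by (intro cp_comp t1 t2)
  qed
qed

lemma all_cp2:
  assumes "p permutes {1..m}"
  shows "crossing_product 2 m p"
  using assms finite_atLeastAtMost
proof (induction rule: permutes_induct)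
  case id then show ?case by (rule crossing_product.cp_id)
next
  case (swap a b p)
  have "crossing_product 2 m (transpose a b)"
  proof (cases "a < b")
    case True then show ?thesis using swap trans_cp2 by auto
  next
    case False
    then have "b < a" using swap by simp
    then show ?thesis using swap trans_cp2[of b a m] by (simp add: transpose_commute)
  qed
  then show ?case using cp_comp swap by blast
qed

lemma main_conj:
  assumes n: "n \<ge> 2" "even n" and m: "3 * n - 2 \<le> m"
    and t: "\<tau> permutes {1..m}" and sz: "perm_size \<tau> + 2 \<le> m"
    and s: "\<sigma> permutes {1..m}" and ct: "cycle_type m \<sigma> = cycle_type m \<tau>"
  shows "\<exists>g. crossing_product n m g \<and> \<sigma> = g \<circ> \<tau> \<circ> inv g"
proof -
  obtain h where h: "h permutes {1..m}" "\<sigma> = h \<circ> \<tau> \<circ> inv h" using conj_perm[OF s t ct] by blast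
  show ?thesis
  proof (cases "n = 2")
    case True
    then show ?thesis using all_cp2[OF h(1)] h(2) by blast
  next
    case False
    then have n4: "n \<ge> 4" using n by presburger
    then have m2: "2 * n + 2 \<le> m" "10 \<le> m" using m by auto
    have F: "full n m {1..m}" by (rule all_full[OF n m2])
    define S where "S = {1..m}"
    define T where "T = {i. \<tau> i \<noteq> i}"
    have TS: "T \<subseteq> S"
    proof
      fix x assume "x \<in> T"
      then have "\<tau> x \<noteq> x" by (simp add: T_def)
      then show "x \<in> S" using permutes_not_in[OF t, of x] unfolding S_def by blast
    qed
    have "card (S - T) = card S - card T" using TS by (simp add: S_def card_Diff_subset finite_subset)
    moreover have "card T = perm_size \<tau>" by (simp add: T_def perm_size_def)
    ultimately have c2: "2 \<le> card (S - T)" using sz by (simp add: S_def)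
    then have "S - T \<noteq> {}" by (metis card.empty not_numeral_le_zero)
    then obtain a where a: "a \<in> S - T" by blast
    have "card (S - T - {a}) \<ge> 1" using c2 a by (simp add: S_def)
    then have "S - T - {a} \<noteq> {}" by (metis card.empty not_one_le_zero)
    then obtain b where b: "b \<in> S - T - {a}" by blast
    have ab: "a \<in> S" "b \<in> S" "a \<noteq> b" "\<tau> a = a" "\<tau> b = b" using a b by (auto simp: T_def)
    have permh: "permutation h" using h(1) by (auto simp: permutation_permutes)
    show ?thesis
    proof (cases "evenperm h")
      case True
      then have "h \<in> carrier (alt_group m)" using h(1) by (simp add: alt_group_carrier)
      then show ?thesis using alt_cp[OF F] h(2) by blast
    next
      case False
      define g where "g = h \<circ> transpose a b"
      have gp: "g permutes {1..m}" unfolding g_def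
        using permutes_compose[OF permutes_swap_id[OF ab(1,2)] h(1)[folded S_def]] by (simp add: S_def)
      have "evenperm g" unfolding g_def
        using evenperm_comp[OF permh permutation_swap_id, of a b] evenperm_swap[of a b] False ab(3) by simp
      then have "g \<in> carrier (alt_group m)" using gp by (simp add: alt_group_carrier)
      then have cg: "crossing_product n m g" using alt_cp[OF F] by blast
      have tc: "transpose a b \<circ> \<tau> = \<tau> \<circ> transpose a b"
      proof
        fix x
        have inj: "\<And>u v. \<tau> u = \<tau> v \<longleftrightarrow> u = v" using t by (meson permutes_inj injD)
        show "(transpose a b \<circ> \<tau>) x = (\<tau> \<circ> transpose a b) x"
          using ab inj[of x a] inj[of x b] by (auto simp: transpose_def)
      qed
      have bt: "bij (transpose a b)" by simp
      have ih: "inv g = transpose a b \<circ> inv h" unfolding g_def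
        using o_inv_distrib[OF permutes_bij[OF h(1)] bt] by (simp add: inv_transpose_eq)
      have "g \<circ> \<tau> \<circ> inv g = h \<circ> (transpose a b \<circ> \<tau>) \<circ> transpose a b \<circ> inv h"
        unfolding ih unfolding g_def by (simp only: comp_assoc)
      also have "\<dots> = h \<circ> \<tau> \<circ> (transpose a b \<circ> transpose a b) \<circ> inv h"
        unfolding tc by (simp only: comp_assoc)
      also have "\<dots> = h \<circ> \<tau> \<circ> inv h" by simp
      finally show ?thesis using cg h(2) by metis
    qed
  qed
qed

theorem lemma2p6:
  fixes n N :: nat and \<tau> \<sigma> :: "nat \<Rightarrow> nat"
  assumes "n \<ge> 2" and "even n" and "N \<ge> 1"
    and "\<tau> permutes {1..N + 3 * n - 3}"
    and "perm_size \<tau> \<le> N"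
    and "\<sigma> permutes {1..N + 3 * n - 3}"
    and "cycle_type (N + 3 * n - 3) \<sigma> = cycle_type (N + 3 * n - 3) \<tau>"
  shows "\<exists>g. crossing_product n (N + 3 * n - 3) g \<and> \<sigma> = g \<circ> \<tau> \<circ> inv g"
  by (rule main_conj) (use assms in auto)

end
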